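(* Let $n\ge 3$ and let $A=[a_{ij}]$ be a real $n\times n$ matrix with zero diagonal, and let $f:\Sigma_n\to\mathbb{R}$, $f(\sigma)=\sum_{i=1}^{n-1}\sum_{j=i+1}^n a_{\sigma(i)\sigma(j)}$, be the LOP objective function with input matrix $A$. Then $\hat f_{(n-2,1,1)}=0$ if and only if $a_{ij}-a_{ji}+a_{jk}-a_{kj}=a_{ik}-a_{ki}$ for all $i,j,k\in\{1,\dots,n\}$.
   Context: $\Sigma_n$ is the symmetric group on $\{1,\dots,n\}$; $\sigma(k)$ is the row/column index placed in position $k$. For a partition $\lambda$ of $n$, $\rho_\lambda$ denotes the irreducible (matrix) representation of $\Sigma_n$ indexed by $\lambda$, and the Fourier coefficient of $f$ at $\lambda$ is $\hat f_\lambda=\sum_{\sigma\in\Sigma_n}f(\sigma)\rho_\lambda(\sigma)$. *)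

theory Defs
  imports Complex_Main "HOL-Combinatorics.Permutations"
begin

definition Sym :: "nat \<Rightarrow> (nat \<Rightarrow> nat) set" where
  "Sym n = {\<sigma>. \<sigma> permutes {1..n}}"

definition lop_obj :: "nat \<Rightarrow> (nat \<Rightarrow> nat \<Rightarrow> real) \<Rightarrow> (nat \<Rightarrow> nat) \<Rightarrow> real" where
  "lop_obj n a \<sigma> = (\<Sum>i=1..n-1. \<Sum>j=i+1..n. a (\<sigma> i) (\<sigma> j))"

text \<open>Partitions as nonincreasing lists of positive parts; Young diagram cells (row, column), 0-based.\<close>
definition is_partition :: "nat \<Rightarrow> nat list \<Rightarrow> bool" where
  "is_partition n lam \<longleftrightarrow> sum_list lam = n \<and> sorted_wrt (\<ge>) lam \<and> (\<forall>x\<in>set lam. 0 < x)"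

definition young_cells :: "nat list \<Rightarrow> (nat \<times> nat) set" where
  "young_cells lam = {(r, c). r < length lam \<and> c < lam ! r}"

definition tableau :: "nat \<Rightarrow> nat list \<Rightarrow> (nat \<times> nat \<Rightarrow> nat) \<Rightarrow> bool" where
  "tableau n lam t \<longleftrightarrow> bij_betw t (young_cells lam) {1..n}"

text \<open>The tabloid of t, represented by the sequence of its row sets.\<close>
definition tabloid :: "nat list \<Rightarrow> (nat \<times> nat \<Rightarrow> nat) \<Rightarrow> (nat \<Rightarrow> nat set)" where
  "tabloid lam t = (\<lambda>r. if r < length lam then {t (r, c) | c. c < lam ! r} else {})"

definition col_stab :: "nat \<Rightarrow> nat list \<Rightarrow> (nat \<times> nat \<Rightarrow> nat) \<Rightarrow> (nat \<Rightarrow> nat) set" where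
  "col_stab n lam t = {\<pi> \<in> Sym n. \<forall>(r, c) \<in> young_cells lam.
       \<exists>r'. (r', c) \<in> young_cells lam \<and> \<pi> (t (r, c)) = t (r', c)}"

text \<open>Action of the group-algebra element  sum_sigma f(sigma) sigma  on the polytabloid
  e_t = sum_{pi in C_t} sign(pi) {pi o t}, as a vector in the permutation module M^lam
  (a real-valued function on tabloids). The Specht module S^lam is spanned by the e_t,
  and rho_lam is the representation of Sigma_n on S^lam.\<close>
definition fourier_on_polytabloid ::
  "nat \<Rightarrow> nat list \<Rightarrow> ((nat \<Rightarrow> nat) \<Rightarrow> real) \<Rightarrow> (nat \<times> nat \<Rightarrow> nat) \<Rightarrow> (nat \<Rightarrow> nat set) \<Rightarrow> real" where
  "fourier_on_polytabloid n lam f t T =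
     (\<Sum>\<sigma>\<in>Sym n. f \<sigma> * (\<Sum>\<pi>\<in>col_stab n lam t.
         of_int (sign \<pi>) * (if tabloid lam (\<sigma> \<circ> \<pi> \<circ> t) = T then 1 else 0)))"

text \<open>hat f_lam = 0, i.e. the operator sum_sigma f(sigma) rho_lam(sigma) on the Specht module
  S^lam vanishes (equivalently: kills every polytabloid). This is independent of the
  choice of basis of S^lam.\<close>
definition fourier_coeff_zero :: "nat \<Rightarrow> nat list \<Rightarrow> ((nat \<Rightarrow> nat) \<Rightarrow> real) \<Rightarrow> bool" where
  "fourier_coeff_zero n lam f \<longleftrightarrow>
     (\<forall>t. tableau n lam t \<longrightarrow> (\<forall>T. fourier_on_polytabloid n lam f t T = 0))"

end

theory Submission
  imports Defs
begin

definition EE :: "nat \<Rightarrow> nat \<Rightarrow> nat \<Rightarrow> nat \<Rightarrow> nat \<Rightarrow> real" where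
  "EE x y z p q = (\<Sum>\<pi>\<in>{\<pi>. \<pi> permutes {x,y,z}}. of_int (sign \<pi>) * (if \<pi> y = p \<and> \<pi> z = q then 1 else 0))"

lemma EE_zero: assumes "p \<notin> {x,y,z}" shows "EE x y z p q = 0"
  unfolding EE_def
proof (rule sum.neutral, safe)
  fix \<pi> assume "\<pi> permutes {x,y,z}"
  hence "\<pi> y \<in> {x,y,z}" using permutes_in_image by fastforce
  thus "of_int (sign \<pi>) * (if \<pi> y = p \<and> \<pi> z = q then 1 else 0) = (0::real)" using assms by auto
qed

lemma EE_zero2: assumes "q \<notin> {x,y,z}" shows "EE x y z p q = 0"
  unfolding EE_def
proof (rule sum.neutral, safe)
  fix \<pi> assume "\<pi> permutes {x,y,z}"
  hence "\<pi> z \<in> {x,y,z}" using permutes_in_image by fastforce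
  thus "of_int (sign \<pi>) * (if \<pi> y = p \<and> \<pi> z = q then 1 else 0) = (0::real)" using assms by auto
qed

lemma EE_left:
  assumes "a \<in> {x,y,z}" "b \<in> {x,y,z}" "a \<noteq> b"
  shows "EE x y z (transpose a b p) (transpose a b q) = - EE x y z p q"
proof -
  let ?r = "transpose a b"
  have r: "?r permutes {x,y,z}" using assms by (simp add: permutes_swap_id)
  have fin: "finite {x,y,z}" by simp
  have "EE x y z (?r p) (?r q) = (\<Sum>\<pi>\<in>{\<pi>. \<pi> permutes {x,y,z}}. of_int (sign (?r \<circ> \<pi>)) * (if (?r \<circ> \<pi>) y = ?r p \<and> (?r \<circ> \<pi>) z = ?r q then 1 else 0))"
    unfolding EE_def by (rule setum_permutations_compose_left[OF r])
  also have "\<dots> = (\<Sum>\<pi>\<in>{\<pi>. \<pi> permutes {x,y,z}}. - (of_int (sign \<pi>) * (if \<pi> y = p \<and> \<pi> z = q then 1 else 0)))"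
  proof (rule sum.cong, simp)
    fix \<pi> assume "\<pi> \<in> {\<pi>. \<pi> permutes {x,y,z}}"
    hence "permutation \<pi>" using fin permutes_imp_permutation by blast
    moreover have "permutation ?r" using r fin permutes_imp_permutation by blast
    ultimately have sg: "sign (?r \<circ> \<pi>) = - sign \<pi>" using assms by (simp add: sign_compose sign_swap_id)
    have [simp]: "?r u = ?r w \<longleftrightarrow> u = w" for u w by (metis transpose_involutory)
    thus "of_int (sign (?r \<circ> \<pi>)) * (if (?r \<circ> \<pi>) y = ?r p \<and> (?r \<circ> \<pi>) z = ?r q then 1 else 0) =
       - (of_int (sign \<pi>) * (if \<pi> y = p \<and> \<pi> z = q then 1 else (0::real)))"
      using sg by simp
  qed
  also have "\<dots> = - EE x y z p q" unfolding EE_def by (simp add: sum_negf)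
  finally show ?thesis .
qed

lemma EE_anti:
  assumes "y \<noteq> z"
  shows "EE x y z q p = - EE x y z p q"
proof -
  let ?r = "transpose y z"
  have r: "?r permutes {x,y,z}" by (simp add: permutes_swap_id)
  have fin: "finite {x,y,z}" by simp
  have "EE x y z q p = (\<Sum>\<pi>\<in>{\<pi>. \<pi> permutes {x,y,z}}. of_int (sign (\<pi> \<circ> ?r)) * (if (\<pi> \<circ> ?r) y = q \<and> (\<pi> \<circ> ?r) z = p then 1 else 0))"
    unfolding EE_def by (rule sum_permutations_compose_right[OF r])
  also have "\<dots> = (\<Sum>\<pi>\<in>{\<pi>. \<pi> permutes {x,y,z}}. - (of_int (sign \<pi>) * (if \<pi> y = p \<and> \<pi> z = q then 1 else 0)))"
  proof (rule sum.cong, simp)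
    fix \<pi> assume "\<pi> \<in> {\<pi>. \<pi> permutes {x,y,z}}"
    hence "permutation \<pi>" using fin permutes_imp_permutation by blast
    moreover have "permutation ?r" using r fin permutes_imp_permutation by blast
    ultimately have "sign (\<pi> \<circ> ?r) = - sign \<pi>" using assms by (simp add: sign_compose sign_swap_id)
    thus "of_int (sign (\<pi> \<circ> ?r)) * (if (\<pi> \<circ> ?r) y = q \<and> (\<pi> \<circ> ?r) z = p then 1 else 0) =
       - (of_int (sign \<pi>) * (if \<pi> y = p \<and> \<pi> z = q then 1 else (0::real)))"
      using assms by auto
  qed
  also have "\<dots> = - EE x y z p q" unfolding EE_def by (simp add: sum_negf)
  finally show ?thesis .
qed

lemma EE_val:
  assumes d: "x \<noteq> y" "y \<noteq> z" "x \<noteq> z" and r: "\<rho> permutes {x,y,z}"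
  shows "EE x y z (\<rho> y) (\<rho> z) = of_int (sign \<rho>)"
proof -
  have eq: "(\<pi> y = \<rho> y \<and> \<pi> z = \<rho> z) \<longleftrightarrow> \<pi> = \<rho>" if p: "\<pi> permutes {x,y,z}" for \<pi>
  proof
    assume h: "\<pi> y = \<rho> y \<and> \<pi> z = \<rho> z"
    have ix: "\<pi> x \<in> {x,y,z}" "\<rho> x \<in> {x,y,z}" "\<rho> y \<in> {x,y,z}" "\<rho> z \<in> {x,y,z}"
      using permutes_in_image[OF p] permutes_in_image[OF r] by auto
    have nx: "\<pi> x \<noteq> \<pi> y" "\<pi> x \<noteq> \<pi> z" "\<rho> x \<noteq> \<rho> y" "\<rho> x \<noteq> \<rho> z" "\<rho> y \<noteq> \<rho> z"
      using d permutes_inj[OF p] permutes_inj[OF r] by (auto dest: injD)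
    have "\<pi> x = \<rho> x" using ix nx h by auto
    show "\<pi> = \<rho>"
    proof
      fix w show "\<pi> w = \<rho> w"
        using h \<open>\<pi> x = \<rho> x\<close> permutes_not_in[OF p] permutes_not_in[OF r] by (cases "w \<in> {x,y,z}") auto
    qed
  qed simp
  have "EE x y z (\<rho> y) (\<rho> z) = (\<Sum>\<pi>\<in>{\<pi>. \<pi> permutes {x,y,z}}. if \<pi> = \<rho> then of_int (sign \<rho>) else 0)"
    unfolding EE_def by (rule sum.cong) (auto simp: eq)
  also have "\<dots> = of_int (sign \<rho>)" using r finite_permutations[of "{x,y,z}"] by (simp add: sum.delta')
  finally show ?thesis .
qed


lemma Esum0:
  assumes fin: "finite S" and xyz: "x \<in> S" "y \<in> S" "z \<in> S" "x \<noteq> y" "y \<noteq> z" "x \<noteq> z" and u: "u \<in> S"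
  shows "(\<Sum>\<tau>\<in>{\<tau>. \<tau> permutes S}. g (\<tau> u) * EE x y z (\<tau> u) (\<tau> v)) = 0"
proof -
  let ?P = "{\<tau>. \<tau> permutes S}"
  have inner: "(\<Sum>\<tau>\<in>?P. if \<tau> u = p then g p * EE x y z p (\<tau> v) else 0) = 0" for p
  proof (cases "p \<in> {x,y,z}")
    case False
    have e0: "EE x y z p w = 0" for w using False by (rule EE_zero)
    show ?thesis by (rule sum.neutral) (simp add: e0)
  next
    case True
    obtain a b where ab: "a \<in> {x,y,z}" "b \<in> {x,y,z}" "a \<noteq> b" "p \<noteq> a" "p \<noteq> b"
    proof -
      from True have "p = x \<or> p = y \<or> p = z" by simp
      thus thesis using xyz that[of y z] that[of x z] that[of x y] by auto
    qed
    let ?r = "transpose a b"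
    have r: "?r permutes S" using ab xyz by (auto intro: permutes_swap_id)
    let ?h = "\<lambda>\<tau>. if \<tau> u = p then g p * EE x y z p (\<tau> v) else 0"
    have "sum ?h ?P = sum (\<lambda>\<tau>. ?h (?r \<circ> \<tau>)) ?P" by (rule setum_permutations_compose_left[OF r])
    also have "\<dots> = sum (\<lambda>\<tau>. - ?h \<tau>) ?P"
    proof (rule sum.cong, simp)
      fix \<tau>
      have e1: "?r (\<tau> u) = p \<longleftrightarrow> \<tau> u = p" using ab by (metis transpose_involutory transpose_apply_other)
      have e2: "EE x y z p (?r (\<tau> v)) = - EE x y z p (\<tau> v)"
        using EE_left[OF ab(1-3), of p "\<tau> v"] ab by simp
      show "?h (?r \<circ> \<tau>) = - ?h \<tau>" using e1 e2 by auto
    qed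
    finally show ?thesis by (simp add: sum_negf)
  qed
  have "(\<Sum>\<tau>\<in>?P. g (\<tau> u) * EE x y z (\<tau> u) (\<tau> v)) = (\<Sum>\<tau>\<in>?P. \<Sum>p\<in>S. if \<tau> u = p then g p * EE x y z p (\<tau> v) else 0)"
  proof (rule sum.cong, simp)
    fix \<tau> assume "\<tau> \<in> ?P"
    hence "\<tau> u \<in> S" using u permutes_in_image by fastforce
    thus "g (\<tau> u) * EE x y z (\<tau> u) (\<tau> v) = (\<Sum>p\<in>S. if \<tau> u = p then g p * EE x y z p (\<tau> v) else 0)"
      using fin by (simp add: sum.delta)
  qed
  also have "\<dots> = (\<Sum>p\<in>S. \<Sum>\<tau>\<in>?P. if \<tau> u = p then g p * EE x y z p (\<tau> v) else 0)" by (rule sum.swap)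
  also have "\<dots> = 0" using inner by simp
  finally show ?thesis .
qed

definition CC :: "nat set \<Rightarrow> nat \<Rightarrow> nat \<Rightarrow> nat \<Rightarrow> nat \<Rightarrow> nat \<Rightarrow> nat \<Rightarrow> nat \<Rightarrow> real" where
  "CC S x y z u v k l = (\<Sum>\<tau>\<in>{\<tau>. \<tau> permutes S}. (if \<tau> k < \<tau> l then 1 else 0) * EE x y z (\<tau> u) (\<tau> v))"

lemma CC_subst:
  assumes "\<rho> permutes S"
  shows "CC S x y z u v k l = (\<Sum>\<tau>\<in>{\<tau>. \<tau> permutes S}. (if \<tau> (\<rho> k) < \<tau> (\<rho> l) then 1 else 0) * EE x y z (\<tau> (\<rho> u)) (\<tau> (\<rho> v)))"
  unfolding CC_def by (subst sum_permutations_compose_right[OF assms]) (simp add: o_def)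

locale trip3 =
  fixes S :: "nat set" and x y z :: nat
  assumes fin: "finite S" and xyz: "x \<in> S" "y \<in> S" "z \<in> S" "x \<noteq> y" "y \<noteq> z" "x \<noteq> z"
begin

lemma CC_tot:
  assumes "k \<noteq> l" "u \<in> S"
  shows "CC S x y z u v k l + CC S x y z u v l k = 0"
proof -
  have "CC S x y z u v k l + CC S x y z u v l k = (\<Sum>\<tau>\<in>{\<tau>. \<tau> permutes S}. (\<lambda>_. 1) (\<tau> u) * EE x y z (\<tau> u) (\<tau> v))"
    unfolding CC_def sum.distrib[symmetric]
  proof (rule sum.cong, simp)
    fix \<tau> assume "\<tau> \<in> {\<tau>. \<tau> permutes S}"
    hence "\<tau> k \<noteq> \<tau> l" using assms permutes_inj by (fastforce dest: injD)
    thus "(if \<tau> k < \<tau> l then 1 else 0) * EE x y z (\<tau> u) (\<tau> v) + (if \<tau> l < \<tau> k then 1 else 0) * EE x y z (\<tau> u) (\<tau> v) =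
         1 * EE x y z (\<tau> u) (\<tau> v)" by auto
  qed
  also have "\<dots> = 0" by (rule Esum0[OF fin xyz assms(2)])
  finally show ?thesis .
qed

lemma CC_kk: "CC S x y z u v k k = 0" unfolding CC_def by simp

lemma CC_disj:
  assumes "k \<in> S" "l \<in> S" "k \<notin> {u,v}" "l \<notin> {u,v}" "k \<noteq> l" "u \<in> S"
  shows "CC S x y z u v k l = 0"
proof -
  have r: "transpose k l permutes S" using assms by (simp add: permutes_swap_id)
  have "CC S x y z u v k l = CC S x y z u v l k"
    using CC_subst[OF r, of x y z u v k l] assms unfolding CC_def by simp
  thus ?thesis using CC_tot[OF assms(5,6), of v] by simp
qed

lemma CC_ul:
  assumes "l \<in> S - {u,v}" "l' \<in> S - {u,v}"
  shows "CC S x y z u v u l = CC S x y z u v u l'"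
proof -
  have r: "transpose l l' permutes S" using assms by (simp add: permutes_swap_id)
  show ?thesis
    using CC_subst[OF r, of x y z u v u l] assms unfolding CC_def by simp
qed

lemma CC_vl:
  assumes "l \<in> S - {u,v}" "u \<in> S" "v \<in> S" "u \<noteq> v"
  shows "CC S x y z u v v l = - CC S x y z u v u l"
proof -
  have r: "transpose u v permutes S" using assms by (simp add: permutes_swap_id)
  have "CC S x y z u v v l = (\<Sum>\<tau>\<in>{\<tau>. \<tau> permutes S}. (if \<tau> u < \<tau> l then 1 else 0) * EE x y z (\<tau> v) (\<tau> u))"
    using CC_subst[OF r, of x y z u v v l] assms by simp
  also have "\<dots> = (\<Sum>\<tau>\<in>{\<tau>. \<tau> permutes S}. - ((if \<tau> u < \<tau> l then 1 else 0) * EE x y z (\<tau> u) (\<tau> v)))"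
    by (rule sum.cong) (auto simp: EE_anti[OF xyz(5), of _ "\<tau> u" for \<tau>])
  finally show ?thesis unfolding CC_def by (simp add: sum_negf)
qed

end


lemma count_gt:
  assumes "a \<in> {1..n}"
  shows "(\<Sum>r\<in>{1..n}. (if a < r then 1 else 0::real)) = real n - real a"
proof -
  have "(\<Sum>r\<in>{1..n}. (if a < r then 1 else 0::real)) = (\<Sum>r\<in>{r\<in>{1..n}. a < r}. 1)"
    using sum.inter_filter[of "{1..n}" "\<lambda>_. 1::real" "\<lambda>r. a < r"] by simp
  also have "{r\<in>{1..n}. a < r} = {Suc a..n}" by auto
  finally show ?thesis using assms by simp
qed

lemma (in trip3) CC_key:
  assumes S: "S = {1..n}" and uv: "u \<in> S" "v \<in> S" "u \<noteq> v"
  shows "(\<Sum>l\<in>S-{u,v}. CC S x y z u v u l) = - CC S x y z u v u v"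
proof -
  let ?P = "{\<tau>. \<tau> permutes S}"
  have cnt: "(\<Sum>l\<in>S-{u,v}. (if \<tau> u < \<tau> l then 1 else 0::real)) = real n - real (\<tau> u) - (if \<tau> u < \<tau> v then 1 else 0)"
    if t: "\<tau> permutes S" for \<tau>
  proof -
    have inj: "inj_on \<tau> (S-{u,v})" using permutes_inj[OF t] by (auto intro: inj_on_subset)
    have im: "\<tau> ` (S-{u,v}) = S - {\<tau> u, \<tau> v}"
      by (simp add: image_set_diff[OF permutes_inj[OF t]] permutes_image[OF t])
    have tu: "\<tau> u \<in> S" "\<tau> v \<in> S" "\<tau> u \<noteq> \<tau> v"
      using uv permutes_in_image[OF t] permutes_inj[OF t] by (auto dest: injD)
    have "(\<Sum>l\<in>S-{u,v}. (if \<tau> u < \<tau> l then 1 else 0::real)) = (\<Sum>r\<in>\<tau> ` (S-{u,v}). (if \<tau> u < r then 1 else 0))"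
      by (simp add: sum.reindex[OF inj])
    also have "\<dots> = (\<Sum>r\<in>S - {\<tau> u, \<tau> v}. (if \<tau> u < r then 1 else 0))" using im by simp
    also have "\<dots> = (\<Sum>r\<in>S. (if \<tau> u < r then 1 else 0)) - (\<Sum>r\<in>{\<tau> u, \<tau> v}. (if \<tau> u < r then 1 else 0))"
      using tu S by (subst sum_diff) auto
    also have "\<dots> = real n - real (\<tau> u) - (if \<tau> u < \<tau> v then 1 else 0)"
      using tu S count_gt[of "\<tau> u" n] by simp
    finally show ?thesis .
  qed
  have "(\<Sum>l\<in>S-{u,v}. CC S x y z u v u l) = (\<Sum>\<tau>\<in>?P. \<Sum>l\<in>S-{u,v}. (if \<tau> u < \<tau> l then 1 else 0) * EE x y z (\<tau> u) (\<tau> v))"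
    unfolding CC_def by (rule sum.swap)
  also have "\<dots> = (\<Sum>\<tau>\<in>?P. (real n - real (\<tau> u)) * EE x y z (\<tau> u) (\<tau> v) - (if \<tau> u < \<tau> v then 1 else 0) * EE x y z (\<tau> u) (\<tau> v))"
  proof (rule sum.cong, simp)
    fix \<tau> assume "\<tau> \<in> ?P"
    hence c: "(\<Sum>l\<in>S-{u,v}. (if \<tau> u < \<tau> l then 1 else 0::real)) = real n - real (\<tau> u) - (if \<tau> u < \<tau> v then 1 else 0)"
      using cnt by simp
    show "(\<Sum>l\<in>S-{u,v}. (if \<tau> u < \<tau> l then 1 else 0) * EE x y z (\<tau> u) (\<tau> v)) =
      (real n - real (\<tau> u)) * EE x y z (\<tau> u) (\<tau> v) - (if \<tau> u < \<tau> v then 1 else 0) * EE x y z (\<tau> u) (\<tau> v)"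
      unfolding sum_distrib_right[symmetric] c by (simp add: algebra_simps)
  qed
  also have "\<dots> = (\<Sum>\<tau>\<in>?P. (\<lambda>p. real n - real p) (\<tau> u) * EE x y z (\<tau> u) (\<tau> v)) - CC S x y z u v u v"
    unfolding CC_def by (simp add: sum_subtractf)
  also have "\<dots> = - CC S x y z u v u v"
    using Esum0[OF fin xyz uv(1)] by simp
  finally show ?thesis .
qed


lemma lop_alt:
  "lop_obj n a \<sigma> = (\<Sum>i\<in>{1..n}. \<Sum>j\<in>{1..n}. if i < j then a (\<sigma> i) (\<sigma> j) else 0)"
proof -
  have inner: "(\<Sum>j\<in>{1..n}. if i < j then a (\<sigma> i) (\<sigma> j) else 0) = (\<Sum>j=i+1..n. a (\<sigma> i) (\<sigma> j))" for i
  proof -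
    have "(\<Sum>j\<in>{1..n}. if i < j then a (\<sigma> i) (\<sigma> j) else 0) = (\<Sum>j\<in>{j\<in>{1..n}. i < j}. a (\<sigma> i) (\<sigma> j))"
      using sum.inter_filter[of "{1..n}" "\<lambda>j. a (\<sigma> i) (\<sigma> j)" "\<lambda>j. i < j"] by simp
    also have "{j\<in>{1..n}. i < j} = {i+1..n}" by auto
    finally show ?thesis .
  qed
  show ?thesis
  proof (cases n)
    case 0 thus ?thesis by (simp add: lop_obj_def)
  next
    case (Suc m)
    hence e: "{1..n} = insert n {1..n-1}" by auto
    have "(\<Sum>i\<in>insert n {1..n-1}. \<Sum>j=i+1..n. a (\<sigma> i) (\<sigma> j)) = (\<Sum>j=n+1..n. a (\<sigma> n) (\<sigma> j)) + (\<Sum>i=1..n-1. \<Sum>j=i+1..n. a (\<sigma> i) (\<sigma> j))"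
      by (rule sum.insert) auto
    thus ?thesis unfolding lop_obj_def inner e[symmetric] by simp
  qed
qed

lemma lop_inv:
  assumes t: "\<tau> permutes {1..n}"
  shows "lop_obj n a (inv \<tau>) = (\<Sum>k\<in>{1..n}. \<Sum>l\<in>{1..n}. if \<tau> k < \<tau> l then a k l else 0)"
proof -
  have b: "bij_betw \<tau> {1..n} {1..n}" using permutes_imp_bij[OF t] .
  have ii: "inv \<tau> (\<tau> k) = k" for k using permutes_inverses(2)[OF t] .
  have "lop_obj n a (inv \<tau>) = (\<Sum>i\<in>{1..n}. \<Sum>j\<in>{1..n}. if i < j then a (inv \<tau> i) (inv \<tau> j) else 0)"
    by (rule lop_alt)
  also have "\<dots> = (\<Sum>k\<in>{1..n}. \<Sum>j\<in>{1..n}. if \<tau> k < j then a (inv \<tau> (\<tau> k)) (inv \<tau> j) else 0)"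
    by (rule sum.reindex_bij_betw[OF b, symmetric])
  also have "\<dots> = (\<Sum>k\<in>{1..n}. \<Sum>j\<in>{1..n}. if \<tau> k < j then a k (inv \<tau> j) else 0)"
    by (simp only: ii)
  also have "\<dots> = (\<Sum>k\<in>{1..n}. \<Sum>l\<in>{1..n}. if \<tau> k < \<tau> l then a k l else 0)"
  proof (rule sum.cong, simp)
    fix k show "(\<Sum>j\<in>{1..n}. if \<tau> k < j then a k (inv \<tau> j) else 0) = (\<Sum>l\<in>{1..n}. if \<tau> k < \<tau> l then a k l else 0)"
      unfolding sum.reindex_bij_betw[OF b, of "\<lambda>j. if \<tau> k < j then a k (inv \<tau> j) else 0", symmetric]
      by (simp only: ii)
  qed
  finally show ?thesis .
qed

lemma decomp:
  fixes a C :: "nat \<Rightarrow> nat \<Rightarrow> real"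
  assumes fin: "finite S" and uv: "u \<in> S" "v \<in> S" "u \<noteq> v"
    and c1: "C u v = A" "C v u = - A" "C u u = 0" "C v v = 0"
    and c2: "\<And>l. l \<in> S - {u,v} \<Longrightarrow> C u l = B \<and> C l u = - B \<and> C v l = - B \<and> C l v = B"
    and c3: "\<And>k l. k \<in> S - {u,v} \<Longrightarrow> l \<in> S - {u,v} \<Longrightarrow> C k l = 0"
  shows "(\<Sum>k\<in>S. \<Sum>l\<in>S. a k l * C k l) =
     A * (a u v - a v u) + B * (\<Sum>l\<in>S-{u,v}. a u l - a l u - a v l + a l v)"
proof -
  let ?R = "S - {u,v}"
  have Sd: "S = insert u (insert v ?R)" using uv by auto
  have fR: "finite ?R" using fin by simp
  have nR: "u \<notin> ?R" "v \<notin> insert v ?R \<longrightarrow> True" "v \<notin> ?R" by auto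
  have split: "(\<Sum>l\<in>S. g l) = g u + g v + (\<Sum>l\<in>?R. g l)" for g :: "nat \<Rightarrow> real"
    using uv fR by (subst Sd) (simp add: nR)
  have Gu: "(\<Sum>l\<in>S. a u l * C u l) = a u v * A + B * (\<Sum>l\<in>?R. a u l)"
    using c1 c2 by (simp add: split sum_distrib_left mult.commute)
  have Gv: "(\<Sum>l\<in>S. a v l * C v l) = - a v u * A - B * (\<Sum>l\<in>?R. a v l)"
    using c1 c2 uv by (simp add: split sum_distrib_left mult.commute sum_negf)
  have Gk: "(\<Sum>l\<in>S. a k l * C k l) = B * (a k v - a k u)" if k: "k \<in> ?R" for k
    using c2[OF k] c3[OF k] by (simp add: split algebra_simps)
  have "(\<Sum>k\<in>S. \<Sum>l\<in>S. a k l * C k l) = (a u v * A + B * (\<Sum>l\<in>?R. a u l)) + (- a v u * A - B * (\<Sum>l\<in>?R. a v l))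
     + (\<Sum>k\<in>?R. B * (a k v - a k u))"
    by (simp only: split[of "\<lambda>k. \<Sum>l\<in>S. a k l * C k l"] Gu Gv Gk cong: sum.cong)
  also have "\<dots> = A * (a u v - a v u) + B * (\<Sum>l\<in>?R. a u l - a l u - a v l + a l v)"
    by (simp add: algebra_simps sum.distrib sum_subtractf sum_distrib_left)
  finally show ?thesis .
qed


lemma (in trip3) main_formula:
  assumes S: "S = {1..n}" and n3: "n \<ge> 3" and uv: "u \<in> S" "v \<in> S" "u \<noteq> v"
  shows "\<exists>B. (\<Sum>\<sigma>\<in>{\<sigma>. \<sigma> permutes S}. lop_obj n a \<sigma> * EE x y z (inv \<sigma> u) (inv \<sigma> v))
      = - B * (\<Sum>l\<in>S-{u,v}. (a u v - a v u) + (a v l - a l v) + (a l u - a u l))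
      \<and> CC S x y z u v u v = - (real n - 2) * B"
proof -
  let ?P = "{\<sigma>. \<sigma> permutes S}"
  let ?R = "S - {u,v}"
  let ?C = "CC S x y z u v"
  have cardR: "card ?R = n - 2" using uv S by (simp add: card_Diff_subset)
  have "card ?R \<noteq> 0" using cardR n3 by simp
  hence "?R \<noteq> {}" by force
  then obtain l0 where l0: "l0 \<in> ?R" by blast
  define A where "A = ?C u v"
  define B where "B = ?C u l0"
  have "(\<Sum>\<sigma>\<in>?P. lop_obj n a \<sigma> * EE x y z (inv \<sigma> u) (inv \<sigma> v))
      = (\<Sum>\<tau>\<in>?P. lop_obj n a (inv \<tau>) * EE x y z (inv (inv \<tau>) u) (inv (inv \<tau>) v))"
    by (rule sum_permutations_inverse)
  also have "\<dots> = (\<Sum>\<tau>\<in>?P. (\<Sum>k\<in>S. \<Sum>l\<in>S. if \<tau> k < \<tau> l then a k l else 0) * EE x y z (\<tau> u) (\<tau> v))"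
    by (rule sum.cong) (simp_all add: permutes_inv_inv lop_inv S)
  also have "\<dots> = (\<Sum>\<tau>\<in>?P. \<Sum>k\<in>S. \<Sum>l\<in>S. a k l * ((if \<tau> k < \<tau> l then 1 else 0) * EE x y z (\<tau> u) (\<tau> v)))"
    by (rule sum.cong[OF refl], simp only: sum_distrib_right, rule sum.cong[OF refl], rule sum.cong[OF refl], simp)
  also have "\<dots> = (\<Sum>k\<in>S. \<Sum>\<tau>\<in>?P. \<Sum>l\<in>S. a k l * ((if \<tau> k < \<tau> l then 1 else 0) * EE x y z (\<tau> u) (\<tau> v)))"
    by (rule sum.swap)
  also have "\<dots> = (\<Sum>k\<in>S. \<Sum>l\<in>S. \<Sum>\<tau>\<in>?P. a k l * ((if \<tau> k < \<tau> l then 1 else 0) * EE x y z (\<tau> u) (\<tau> v)))"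
    by (rule sum.cong[OF refl], rule sum.swap)
  also have "\<dots> = (\<Sum>k\<in>S. \<Sum>l\<in>S. a k l * ?C k l)"
    unfolding CC_def by (simp add: sum_distrib_left)
  also have "\<dots> = A * (a u v - a v u) + B * (\<Sum>l\<in>?R. a u l - a l u - a v l + a l v)"
  proof (rule decomp[OF fin uv])
    show "?C u v = A" by (simp add: A_def)
    show "?C v u = - A" using CC_tot[OF uv(3) uv(1), of v] by (simp add: A_def)
    show "?C u u = 0" "?C v v = 0" by (simp_all add: CC_kk)
    fix l assume l: "l \<in> ?R"
    have cul: "?C u l = B" using CC_ul[OF l l0] by (simp add: B_def)
    have "l \<noteq> u" "l \<noteq> v" using l by auto
    moreover have cvl: "?C v l = - B" using CC_vl[OF l uv] cul by simp
    ultimately show "?C u l = B \<and> ?C l u = - B \<and> ?C v l = - B \<and> ?C l v = B"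
      using cul CC_tot[of u l u v] CC_tot[of v l u v] uv by (simp add: algebra_simps)
  next
    fix k l assume k: "k \<in> ?R" and l: "l \<in> ?R"
    show "?C k l = 0"
    proof (cases "k = l")
      case True thus ?thesis by (simp add: CC_kk)
    next
      case False thus ?thesis using k l uv by (intro CC_disj) auto
    qed
  qed
  also have "\<dots> = - B * (\<Sum>l\<in>?R. (a u v - a v u) + (a v l - a l v) + (a l u - a u l))"
  proof -
    have "(\<Sum>l\<in>?R. ?C u l) = (\<Sum>l\<in>?R. B)"
      by (rule sum.cong[OF refl]) (simp only: B_def CC_ul[OF _ l0])
    hence "- A = (real n - 2) * B" using CC_key[OF S uv] cardR n3 by (simp add: A_def of_nat_diff)
    hence "A = - (real n - 2) * B" by (metis minus_minus mult_minus_left)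
    have s1: "(\<Sum>l\<in>?R. (a u v - a v u) + ((a v l - a l v) + (a l u - a u l))) = real (card ?R) * (a u v - a v u) + (\<Sum>l\<in>?R. (a v l - a l v) + (a l u - a u l))"
      by (simp add: sum.distrib)
    have s2: "(\<Sum>l\<in>?R. (a v l - a l v) + (a l u - a u l)) = - (\<Sum>l\<in>?R. a u l - a l u - a v l + a l v)"
      by (simp add: sum_negf[symmetric] algebra_simps)
    have cR: "real (card ?R) = real n - 2" using cardR n3 by (simp add: of_nat_diff)
    show ?thesis unfolding add.assoc s1 s2 cR \<open>A = - (real n - 2) * B\<close> by (simp add: algebra_simps)
  qed
  finally have F: "(\<Sum>\<sigma>\<in>?P. lop_obj n a \<sigma> * EE x y z (inv \<sigma> u) (inv \<sigma> v)) = - B * (\<Sum>l\<in>?R. (a u v - a v u) + (a v l - a l v) + (a l u - a u l))" .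
  have "(\<Sum>l\<in>?R. ?C u l) = (\<Sum>l\<in>?R. B)"
    by (rule sum.cong[OF refl]) (simp only: B_def CC_ul[OF _ l0])
  hence "- ?C u v = (real n - 2) * B" using CC_key[OF S uv] cardR n3 by (simp add: of_nat_diff)
  hence "?C u v = - (real n - 2) * B" by (metis minus_minus mult_minus_left)
  with F show ?thesis by blast
qed


lemma yc: "(r, c) \<in> young_cells [n-2,1,1] \<longleftrightarrow> (r = 0 \<and> c < n - 2) \<or> (r = 1 \<and> c = 0) \<or> (r = 2 \<and> c = 0)"
  unfolding young_cells_def by (auto simp: nth_Cons')

lemma yc2: "(r, c) \<in> young_cells [n-2,Suc 0,Suc 0] \<longleftrightarrow> (r = 0 \<and> c < n - 2) \<or> (r = 1 \<and> c = 0) \<or> (r = 2 \<and> c = 0)"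
  unfolding young_cells_def by (auto simp: nth_Cons')

lemmas ycs = yc yc2

definition tabS :: "nat \<Rightarrow> nat \<Rightarrow> nat \<Rightarrow> nat \<Rightarrow> nat set" where
  "tabS n p q = (\<lambda>r. if r = 0 then {1..n} - {p,q} else if r = 1 then {p} else if r = 2 then {q} else {})"

lemma tabS_eq: "tabS n p q = tabS n p' q' \<longleftrightarrow> p = p' \<and> q = q'"
proof
  assume h: "tabS n p q = tabS n p' q'"
  have "tabS n p q 1 = tabS n p' q' 1" "tabS n p q 2 = tabS n p' q' 2" using h by simp_all
  thus "p = p' \<and> q = q'" unfolding tabS_def by simp
qed simp

locale tab3 =
  fixes n :: nat and t :: "nat \<times> nat \<Rightarrow> nat"
  assumes n3: "n \<ge> 3" and tab: "tableau n [n-2,1,1] t"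
begin

abbreviation "x \<equiv> t (0,0)"
abbreviation "y \<equiv> t (1,0)"
abbreviation "z \<equiv> t (2,0)"

lemma bij: "bij_betw t (young_cells [n-2,1,1]) {1..n}" using tab unfolding tableau_def .
lemma inj: "inj_on t (young_cells [n-2,1,1])" using bij by (rule bij_betw_imp_inj_on)
lemma img: "t ` young_cells [n-2,1,1] = {1..n}" using bij by (rule bij_betw_imp_surj_on)

lemma cells: "(0,0) \<in> young_cells [n-2,1,1]" "(1,0) \<in> young_cells [n-2,1,1]" "(2,0) \<in> young_cells [n-2,1,1]"
  using n3 by (auto simp: ycs)

lemma xyz_in: "x \<in> {1..n}" "y \<in> {1..n}" "z \<in> {1..n}"
  using img cells by blast+

lemma xyz_dist: "x \<noteq> y" "y \<noteq> z" "x \<noteq> z"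
  using inj cells by (auto dest: inj_onD)

lemma trip_ok: "trip3 {1..n} x y z"
  using xyz_in xyz_dist by unfold_locales auto

lemma row0_other: assumes "0 < c" "c < n - 2" shows "t (0,c) \<notin> {x,y,z}"
proof -
  have m: "(0,c) \<in> young_cells [n-2,1,1]" using assms by (simp add: ycs)
  show ?thesis
    using inj_onD[OF inj _ m cells(1)] inj_onD[OF inj _ m cells(2)] inj_onD[OF inj _ m cells(3)] assms by auto
qed

lemma other_row0: "w \<in> {1..n} \<Longrightarrow> w \<notin> {x,y,z} \<Longrightarrow> \<exists>c. 0 < c \<and> c < n - 2 \<and> w = t (0,c)"
proof -
  assume w: "w \<in> {1..n}" "w \<notin> {x,y,z}"
  then obtain r c where rc: "(r,c) \<in> young_cells [n-2,1,1]" "w = t (r,c)" using img by force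
  from rc(1) have "(r = 0 \<and> c < n - 2) \<or> (r = 1 \<and> c = 0) \<or> (r = 2 \<and> c = 0)" by (simp add: ycs)
  hence "r = 0" "c < n - 2" "c \<noteq> 0" using w rc(2) by (cases "c = 0"; auto)+
  thus ?thesis using rc(2) by blast
qed

lemma row0_img: "{t (0,c) | c. c < n - 2} = {1..n} - {y,z}"
proof
  show "{t (0,c) | c. c < n - 2} \<subseteq> {1..n} - {y,z}"
  proof
    fix w assume "w \<in> {t (0,c) | c. c < n - 2}"
    then obtain c where c: "c < n - 2" "w = t (0,c)" by blast
    hence m: "(0,c) \<in> young_cells [n-2,1,1]" by (simp add: ycs)
    have "w \<in> {1..n}" using img m c(2) by blast
    moreover have "w \<noteq> y" using inj_onD[OF inj _ m cells(2)] c(2) by auto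
    moreover have "w \<noteq> z" using inj_onD[OF inj _ m cells(3)] c(2) by auto
    ultimately show "w \<in> {1..n} - {y,z}" by blast
  qed
  show "{1..n} - {y,z} \<subseteq> {t (0,c) | c. c < n - 2}"
  proof
    fix w assume w: "w \<in> {1..n} - {y,z}"
    show "w \<in> {t (0,c) | c. c < n - 2}"
    proof (cases "w = x")
      case True thus ?thesis using n3 by auto
    next
      case False thus ?thesis using other_row0[of w] w by auto
    qed
  qed
qed

lemma col_stab_eq: "col_stab n [n-2,1,1] t = {\<pi>. \<pi> permutes {x,y,z}}"
proof (intro set_eqI iffI)
  fix \<pi> assume "\<pi> \<in> col_stab n [n-2,1,1] t"
  hence pc: "\<pi> \<in> Sym n \<and> (\<forall>(r, c) \<in> young_cells [n-2,1,1].
       \<exists>r'. (r', c) \<in> young_cells [n-2,1,1] \<and> \<pi> (t (r, c)) = t (r', c))"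
    unfolding col_stab_def by (rule CollectD)
  hence p: "\<pi> permutes {1..n}" by (simp only: Sym_def mem_Collect_eq)
  have c0: "\<forall>(r, c) \<in> young_cells [n-2,1,1].
       \<exists>r'. (r', c) \<in> young_cells [n-2,1,1] \<and> \<pi> (t (r, c)) = t (r', c)"
    using pc by (rule conjunct2)
  have c: "\<exists>r'. (r', c) \<in> young_cells [n-2,1,1] \<and> \<pi> (t (r, c)) = t (r', c)"
    if "(r, c) \<in> young_cells [n-2,1,1]" for r c
    using bspec[OF c0 that] by simp
  have fix0: "\<pi> w = w" if nw: "w \<notin> {x,y,z}" for w
  proof (cases "w \<in> {1..n}")
    case False thus ?thesis by (rule permutes_not_in[OF p])
  next
    case True
    obtain c where cc: "0 < c" "c < n - 2" "w = t (0,c)" using other_row0[OF True nw] by blast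
    hence m: "(0,c) \<in> young_cells [n-2,1,1]" by (simp add: ycs)
    obtain r' where "(r', c) \<in> young_cells [n-2,1,1]" "\<pi> (t (0, c)) = t (r', c)" using c[OF m] by blast
    thus ?thesis using cc by (auto simp: ycs)
  qed
  show "\<pi> \<in> {\<pi>. \<pi> permutes {x,y,z}}"
    using permutes_superset[OF p, of "{x,y,z}"] fix0 by blast
next
  fix \<pi> assume "\<pi> \<in> {\<pi>. \<pi> permutes {x,y,z}}"
  hence p: "\<pi> permutes {x,y,z}" by simp
  have sub: "{x,y,z} \<subseteq> {1..n}" using xyz_in by auto
  have pS: "\<pi> permutes {1..n}" by (rule permutes_subset[OF p sub])
  have "\<exists>r'. (r', c) \<in> young_cells [n-2,1,1] \<and> \<pi> (t (r, c)) = t (r', c)"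
    if rc: "(r,c) \<in> young_cells [n-2,1,1]" for r c
  proof (cases "c = 0")
    case True
    hence "t (r,c) \<in> {x,y,z}" using rc by (auto simp: ycs)
    hence "\<pi> (t (r,c)) \<in> {x,y,z}" using permutes_in_image[OF p] by blast
    hence "\<pi> (t (r,c)) = t (0,0) \<or> \<pi> (t (r,c)) = t (1,0) \<or> \<pi> (t (r,c)) = t (2,0)" by simp
    thus ?thesis using True cells by blast
  next
    case False
    hence "r = 0" "c < n - 2" using rc by (auto simp: ycs)
    hence "\<pi> (t (r,c)) = t (r,c)" using row0_other[of c] False permutes_not_in[OF p] by auto
    thus ?thesis using rc by blast
  qed
  hence "\<forall>(r, c) \<in> young_cells [n-2,1,1].
       \<exists>r'. (r', c) \<in> young_cells [n-2,1,1] \<and> \<pi> (t (r, c)) = t (r', c)" by (simp only: Ball_def split_paired_All case_prod_conv) blast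
  moreover have "\<pi> \<in> Sym n" unfolding Sym_def using pS by simp
  ultimately show "\<pi> \<in> col_stab n [n-2,1,1] t" unfolding col_stab_def by (intro CollectI conjI)
qed

lemma tabloid_eq:
  assumes g: "g permutes {1..n}"
  shows "tabloid [n-2,1,1] (g \<circ> t) = tabS n (g y) (g z)"
proof
  fix r
  have b: "bij_betw g {1..n} {1..n}" using permutes_imp_bij[OF g] .
  have "{(g \<circ> t) (0, c) |c. c < n - 2} = g ` {t (0,c) | c. c < n - 2}" by auto
  also have "\<dots> = g ` ({1..n} - {y,z})" by (simp add: row0_img)
  also have "\<dots> = {1..n} - {g y, g z}"
    using permutes_inj[OF g] permutes_image[OF g] by (simp add: image_set_diff)
  finally have r0: "{(g \<circ> t) (0, c) |c. c < n - 2} = {1..n} - {g y, g z}" .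
  show "tabloid [n-2,1,1] (g \<circ> t) r = tabS n (g y) (g z) r"
    unfolding tabloid_def tabS_def using r0 by (auto simp: nth_Cons')
qed

end


lemma exists_perm2:
  assumes "p \<in> S" "q \<in> S" "p' \<in> S" "q' \<in> S" "p \<noteq> q" "p' \<noteq> q'"
  shows "\<exists>\<rho>. \<rho> permutes S \<and> \<rho> p = p' \<and> \<rho> q = q'"
proof -
  let ?p1 = "transpose q q' p"
  have p1: "?p1 \<in> S" using assms by (auto simp: transpose_def)
  let ?r = "transpose ?p1 p' \<circ> transpose q q'"
  have "?r permutes S" using assms p1 by (intro permutes_compose permutes_swap_id) auto
  moreover have "?r p = p'" by simp
  moreover have "?r q = q'" using assms by (auto simp: transpose_def)
  ultimately show ?thesis by blast
qed

lemma EE312: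
  "EE 3 1 2 1 2 = 1" "EE 3 1 2 2 3 = 1" "EE 3 1 2 3 1 = 1"
proof -
  show "EE 3 1 2 1 2 = 1" using EE_val[where x=3 and y=1 and z=2 and \<rho>=id] by simp
  let ?r = "transpose (1::nat) 3 \<circ> transpose 1 2"
  have "?r permutes {3,1,2}" by (intro permutes_compose permutes_swap_id) auto
  moreover have "sign ?r = 1" by (simp add: sign_compose permutation_swap_id sign_swap_id)
  ultimately show "EE 3 1 2 2 3 = 1" using EE_val[where x=3 and y=1 and z=2 and \<rho>="?r"] by simp
  let ?s = "transpose (1::nat) 2 \<circ> transpose 1 3"
  have "?s permutes {3,1,2}" by (intro permutes_compose permutes_swap_id) auto
  moreover have "sign ?s = 1" by (simp add: sign_compose permutation_swap_id sign_swap_id)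
  ultimately show "EE 3 1 2 3 1 = 1" using EE_val[where x=3 and y=1 and z=2 and \<rho>="?s"] by simp
qed

lemma CC_pos:
  assumes n3: "n \<ge> 3" and uv: "u \<in> {1..n}" "v \<in> {1..n}" "u \<noteq> v"
  shows "CC {1..n} 3 1 2 u v u v > 0"
proof -
  let ?S = "{1..n}"
  let ?P = "{\<tau>. \<tau> permutes ?S}"
  define N where "N p q = (\<Sum>\<tau>\<in>?P. if \<tau> u = p \<and> \<tau> v = q then 1 else (0::real))" for p q
  have val: "(if p < q then 1 else 0) * EE 3 1 2 p q = (if p = 1 \<and> q = 2 then 1 else 0) + (if p = 2 \<and> q = 3 then 1 else 0) - (if p = 1 \<and> q = 3 then 1 else 0)"
    if pq: "p \<noteq> q" for p q :: nat
  proof (cases "p \<in> {3,1,2} \<and> q \<in> {3,1,2}")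
    case False thus ?thesis
      using EE_zero[where x=3 and y=1 and z=2 and p=p and q=q] EE_zero2[where x=3 and y=1 and z=2 and p=p and q=q] by auto
  next
    case True
    have a: "EE 3 1 2 1 3 = -1" using EE_anti[where x=3 and y=1 and z=2 and q=1 and p=3] EE312 by simp
    from True have "p = 3 \<or> p = 1 \<or> p = 2" "q = 3 \<or> q = 1 \<or> q = 2" by auto
    thus ?thesis using pq EE312 a by auto
  qed
  have Neq: "N p' q' = N p q" if h: "p \<in> ?S" "q \<in> ?S" "p' \<in> ?S" "q' \<in> ?S" "p \<noteq> q" "p' \<noteq> q'" for p q p' q'
  proof -
    obtain \<rho> where r: "\<rho> permutes ?S" "\<rho> p = p'" "\<rho> q = q'" using exists_perm2[OF h] by blast
    have ri: "\<rho> w = \<rho> w' \<longleftrightarrow> w = w'" for w w' using permutes_inj[OF r(1)] by (auto dest: injD)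
    have "N p' q' = (\<Sum>\<tau>\<in>?P. if (\<rho> \<circ> \<tau>) u = p' \<and> (\<rho> \<circ> \<tau>) v = q' then 1 else (0::real))"
      unfolding N_def by (rule setum_permutations_compose_left[OF r(1)])
    also have "\<dots> = N p q" unfolding N_def by (simp add: r(2)[symmetric] r(3)[symmetric] ri)
    finally show ?thesis .
  qed
  have "CC ?S 3 1 2 u v u v = (\<Sum>\<tau>\<in>?P. (if \<tau> u = 1 \<and> \<tau> v = 2 then 1 else 0) + (if \<tau> u = 2 \<and> \<tau> v = 3 then 1 else 0) - (if \<tau> u = 1 \<and> \<tau> v = 3 then 1 else 0))"
    unfolding CC_def
  proof (rule sum.cong, simp)
    fix \<tau> assume "\<tau> \<in> ?P"
    hence "\<tau> u \<noteq> \<tau> v" using uv permutes_inj by (fastforce dest: injD)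
    thus "(if \<tau> u < \<tau> v then 1 else 0) * EE 3 1 2 (\<tau> u) (\<tau> v) = (if \<tau> u = 1 \<and> \<tau> v = 2 then 1 else 0) + (if \<tau> u = 2 \<and> \<tau> v = 3 then 1 else 0) - (if \<tau> u = 1 \<and> \<tau> v = 3 then 1 else 0)"
      by (rule val)
  qed
  also have "\<dots> = N 1 2 + N 2 3 - N 1 3" unfolding N_def by (simp add: sum.distrib sum_subtractf)
  also have "\<dots> = N 1 2" using Neq[of 1 2 2 3] Neq[of 1 2 1 3] n3 by simp
  finally have cc: "CC ?S 3 1 2 u v u v = N 1 2" .
  obtain \<tau>0 where t0: "\<tau>0 permutes ?S" "\<tau>0 u = 1" "\<tau>0 v = 2" using exists_perm2[of u ?S v 1 2] uv n3 by auto
  have "(if \<tau>0 u = 1 \<and> \<tau>0 v = 2 then 1 else (0::real)) \<le> N 1 2"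
    unfolding N_def by (rule member_le_sum) (use t0 finite_permutations[of ?S] in auto)
  thus ?thesis using cc t0 by simp
qed

lemma final_alg:
  fixes a :: "nat \<Rightarrow> nat \<Rightarrow> real"
  assumes n: "n \<ge> 1" and H: "\<forall>u\<in>{1..n}. \<forall>v\<in>{1..n}. u \<noteq> v \<longrightarrow> (\<Sum>l\<in>{1..n}-{u,v}. (a u v - a v u) + (a v l - a l v) + (a l u - a u l)) = 0"
  shows "\<forall>i\<in>{1..n}. \<forall>j\<in>{1..n}. \<forall>k\<in>{1..n}. a i j - a j i + a j k - a k j = a i k - a k i"
proof -
  let ?S = "{1..n::nat}"
  define W where "W i j = a i j - a j i" for i j
  define Rr where "Rr i = (\<Sum>l\<in>?S. W i l)" for i
  have full: "(\<Sum>l\<in>?S. W u v + W v l + W l u) = 0" if uv: "u \<in> ?S" "v \<in> ?S" for u v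
  proof (cases "u = v")
    case True thus ?thesis by (simp add: W_def)
  next
    case False
    have Sd: "?S = insert u (insert v (?S - {u,v}))" using uv by auto
    have "(\<Sum>l\<in>?S. W u v + W v l + W l u) = (W u v + W v u + W u u) + (W u v + W v v + W v u) + (\<Sum>l\<in>?S-{u,v}. W u v + W v l + W l u)"
      using False by (subst Sd) (simp add: algebra_simps)
    also have "\<dots> = 0" using H uv False by (simp add: W_def)
    finally show ?thesis .
  qed
  have key: "real n * W u v + Rr v - Rr u = 0" if uv: "u \<in> ?S" "v \<in> ?S" for u v
  proof -
    have "(\<Sum>l\<in>?S. W l u) = - Rr u" unfolding Rr_def W_def by (simp add: sum_negf[symmetric])
    thus ?thesis using full[OF uv] unfolding Rr_def by (simp add: sum.distrib)
  qed
  have nz: "real n \<noteq> 0" using n by simp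
  have Wf: "W u v = (Rr u - Rr v) / real n" if "u \<in> ?S" "v \<in> ?S" for u v
    using key[OF that] nz by (simp add: field_simps)
  show ?thesis
  proof (intro ballI)
    fix i j k assume h: "i \<in> ?S" "j \<in> ?S" "k \<in> ?S"
    have "real n * W i j + real n * W j k = real n * W i k" using key[of i j] key[of j k] key[of i k] h by simp
    hence "real n * (W i j + W j k) = real n * W i k" by (simp add: algebra_simps)
    hence "W i j + W j k = W i k" using nz by simp
    thus "a i j - a j i + a j k - a k j = a i k - a k i" unfolding W_def by simp
  qed
qed


lemma EE_diag: assumes "y \<noteq> z" shows "EE x y z p p = 0"
  using EE_anti[OF assms, of x p p] by simp

context tab3
begin

lemma fourier_tabS:
  "fourier_on_polytabloid n [n-2,1,1] f t T = (\<Sum>\<sigma>\<in>{\<sigma>. \<sigma> permutes {1..n}}. f \<sigma> *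
     (\<Sum>\<pi>\<in>{\<pi>. \<pi> permutes {x,y,z}}. of_int (sign \<pi>) * (if tabS n (\<sigma> (\<pi> y)) (\<sigma> (\<pi> z)) = T then 1 else 0)))"
  unfolding fourier_on_polytabloid_def Sym_def col_stab_eq
proof (rule sum.cong[OF refl])
  fix \<sigma> assume s: "\<sigma> \<in> {\<sigma>. \<sigma> permutes {1..n}}"
  have "(\<Sum>\<pi>\<in>{\<pi>. \<pi> permutes {x,y,z}}. of_int (sign \<pi>) * (if tabloid [n-2,1,1] (\<sigma> \<circ> \<pi> \<circ> t) = T then 1 else 0)) =
     (\<Sum>\<pi>\<in>{\<pi>. \<pi> permutes {x,y,z}}. of_int (sign \<pi>) * (if tabS n (\<sigma> (\<pi> y)) (\<sigma> (\<pi> z)) = T then 1 else (0::real)))"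
  proof (rule sum.cong[OF refl])
    fix \<pi> assume p: "\<pi> \<in> {\<pi>. \<pi> permutes {x,y,z}}"
    have sub: "{x,y,z} \<subseteq> {1..n}" using xyz_in by auto
    have "\<sigma> \<circ> \<pi> permutes {1..n}"
      using s p permutes_subset[OF _ sub] by (auto intro: permutes_compose)
    from tabloid_eq[OF this] have "tabloid [n-2,1,1] (\<sigma> \<circ> \<pi> \<circ> t) = tabS n (\<sigma> (\<pi> y)) (\<sigma> (\<pi> z))"
      by (simp add: o_assoc)
    thus "of_int (sign \<pi>) * (if tabloid [n-2,1,1] (\<sigma> \<circ> \<pi> \<circ> t) = T then 1 else 0) =
       of_int (sign \<pi>) * (if tabS n (\<sigma> (\<pi> y)) (\<sigma> (\<pi> z)) = T then 1 else (0::real))" by simp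
  qed
  thus "f \<sigma> * (\<Sum>\<pi>\<in>{\<pi>. \<pi> permutes {x,y,z}}. of_int (sign \<pi>) * (if tabloid [n-2,1,1] (\<sigma> \<circ> \<pi> \<circ> t) = T then 1 else 0)) =
     f \<sigma> * (\<Sum>\<pi>\<in>{\<pi>. \<pi> permutes {x,y,z}}. of_int (sign \<pi>) * (if tabS n (\<sigma> (\<pi> y)) (\<sigma> (\<pi> z)) = T then 1 else 0))"
    by simp
qed

lemma fourier_uv:
  "fourier_on_polytabloid n [n-2,1,1] f t (tabS n u v) =
     (\<Sum>\<sigma>\<in>{\<sigma>. \<sigma> permutes {1..n}}. f \<sigma> * EE x y z (inv \<sigma> u) (inv \<sigma> v))"
  unfolding fourier_tabS
proof (rule sum.cong[OF refl])
  fix \<sigma> assume s: "\<sigma> \<in> {\<sigma>. \<sigma> permutes {1..n}}"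
  hence s': "\<sigma> permutes {1..n}" by simp
  have iff: "\<sigma> w = u' \<longleftrightarrow> w = inv \<sigma> u'" for w u'
    using permutes_inverses[OF s'] by metis
  show "f \<sigma> * (\<Sum>\<pi>\<in>{\<pi>. \<pi> permutes {x,y,z}}. of_int (sign \<pi>) * (if tabS n (\<sigma> (\<pi> y)) (\<sigma> (\<pi> z)) = tabS n u v then 1 else 0)) =
     f \<sigma> * EE x y z (inv \<sigma> u) (inv \<sigma> v)"
    unfolding EE_def tabS_eq iff by simp
qed

lemma fourier_other:
  assumes "\<forall>u\<in>{1..n}. \<forall>v\<in>{1..n}. T \<noteq> tabS n u v"
  shows "fourier_on_polytabloid n [n-2,1,1] f t T = 0"
  unfolding fourier_tabS
proof (rule sum.neutral, rule ballI)
  fix \<sigma> assume s: "\<sigma> \<in> {\<sigma>. \<sigma> permutes {1..n}}"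
  have "(\<Sum>\<pi>\<in>{\<pi>. \<pi> permutes {x,y,z}}. of_int (sign \<pi>) * (if tabS n (\<sigma> (\<pi> y)) (\<sigma> (\<pi> z)) = T then 1 else (0::real))) = 0"
  proof (rule sum.neutral, rule ballI)
    fix \<pi> assume p: "\<pi> \<in> {\<pi>. \<pi> permutes {x,y,z}}"
    have "\<pi> y \<in> {x,y,z}" "\<pi> z \<in> {x,y,z}" using p permutes_in_image[of \<pi> "{x,y,z}"] by auto
    hence "\<pi> y \<in> {1..n}" "\<pi> z \<in> {1..n}" using xyz_in by auto
    hence "\<sigma> (\<pi> y) \<in> {1..n}" "\<sigma> (\<pi> z) \<in> {1..n}" using s permutes_in_image[of \<sigma> "{1..n}"] by auto
    hence "tabS n (\<sigma> (\<pi> y)) (\<sigma> (\<pi> z)) \<noteq> T" using assms by metis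
    thus "of_int (sign \<pi>) * (if tabS n (\<sigma> (\<pi> y)) (\<sigma> (\<pi> z)) = T then 1 else (0::real)) = 0" by simp
  qed
  thus "f \<sigma> * (\<Sum>\<pi>\<in>{\<pi>. \<pi> permutes {x,y,z}}. of_int (sign \<pi>) * (if tabS n (\<sigma> (\<pi> y)) (\<sigma> (\<pi> z)) = T then 1 else 0)) = 0"
    by simp
qed

end

lemma tableau0:
  assumes n3: "n \<ge> 3"
  shows "tableau n [n-2,1,1] (\<lambda>(r,c). if r = 0 then c + 3 else r)"
  unfolding tableau_def bij_betw_def
proof
  let ?t = "\<lambda>(r::nat,c::nat). if r = 0 then c + 3 else r"
  show "inj_on ?t (young_cells [n-2,1,1])"
    by (rule inj_onI) (auto simp: ycs)
  show "?t ` young_cells [n-2,1,1] = {1..n}"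
  proof
    show "?t ` young_cells [n-2,1,1] \<subseteq> {1..n}" using n3 by (auto simp: ycs)
    show "{1..n} \<subseteq> ?t ` young_cells [n-2,1,1]"
    proof
      fix w assume w: "w \<in> {1..n}"
      show "w \<in> ?t ` young_cells [n-2,1,1]"
      proof (cases "w \<ge> 3")
        case True
        hence "(0, w - 3) \<in> young_cells [n-2,1,1]" using w by (simp add: ycs)
        moreover have "w = ?t (0, w - 3)" using True by simp
        ultimately show ?thesis by (rule rev_image_eqI)
      next
        case False
        hence "w = 1 \<or> w = 2" using w by auto
        thus ?thesis
        proof
          assume "w = 1"
          moreover have "(1, 0) \<in> young_cells [n-2,1,1]" by (simp add: ycs)
          ultimately show ?thesis by (intro rev_image_eqI[of "(1,0)"]) auto
        next
          assume "w = 2"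
          moreover have "(2, 0) \<in> young_cells [n-2,1,1]" by (simp add: ycs)
          ultimately show ?thesis by (intro rev_image_eqI[of "(2,0)"]) auto
        qed
      qed
    qed
  qed
qed

theorem proposition1:
  fixes n :: nat and a :: "nat \<Rightarrow> nat \<Rightarrow> real"
  assumes "n \<ge> 3"
    and "\<forall>i\<in>{1..n}. a i i = 0"
  shows "fourier_coeff_zero n [n - 2, 1, 1] (lop_obj n a) \<longleftrightarrow>
    (\<forall>i\<in>{1..n}. \<forall>j\<in>{1..n}. \<forall>k\<in>{1..n}.
        a i j - a j i + a j k - a k j = a i k - a k i)"
proof
  have n3: "n \<ge> 3" using assms(1) .
  let ?S = "{1..n}"
  let ?f = "lop_obj n a"
  assume L: "fourier_coeff_zero n [n - 2, 1, 1] ?f"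
  define t0 where "t0 = (\<lambda>(r::nat,c::nat). if r = 0 then c + 3 else r)"
  have tab0: "tableau n [n-2,1,1] t0" unfolding t0_def by (rule tableau0[OF n3])
  interpret T0: tab3 n t0 using n3 tab0 by unfold_locales
  have x0: "t0 (0,0) = 3" "t0 (1,0) = 1" "t0 (2,0) = 2" by (simp_all add: t0_def)
  have tr: "trip3 {1..n} 3 1 2" using T0.trip_ok unfolding x0 .
  have H: "\<forall>u\<in>?S. \<forall>v\<in>?S. u \<noteq> v \<longrightarrow> (\<Sum>l\<in>?S-{u,v}. (a u v - a v u) + (a v l - a l v) + (a l u - a u l)) = 0"
  proof (intro ballI impI)
    fix u v assume u: "u \<in> ?S" and v: "v \<in> ?S" and uv: "u \<noteq> v"
    have F0: "fourier_on_polytabloid n [n-2,1,1] ?f t0 (tabS n u v) = 0"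
      using L tab0 unfolding fourier_coeff_zero_def by blast
    hence F1: "(\<Sum>\<sigma>\<in>{\<sigma>. \<sigma> permutes ?S}. ?f \<sigma> * EE 3 1 2 (inv \<sigma> u) (inv \<sigma> v)) = 0"
      using T0.fourier_uv[of ?f u v] unfolding x0 by simp
    obtain B where B: "(\<Sum>\<sigma>\<in>{\<sigma>. \<sigma> permutes ?S}. ?f \<sigma> * EE 3 1 2 (inv \<sigma> u) (inv \<sigma> v))
      = - B * (\<Sum>l\<in>?S-{u,v}. (a u v - a v u) + (a v l - a l v) + (a l u - a u l))"
      "CC ?S 3 1 2 u v u v = - (real n - 2) * B"
      using trip3.main_formula[OF tr refl n3 u v uv, of a] by blast
    have "B \<noteq> 0" using CC_pos[OF n3 u v uv] B(2) by auto
    thus "(\<Sum>l\<in>?S-{u,v}. (a u v - a v u) + (a v l - a l v) + (a l u - a u l)) = 0"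
      using B(1) F1 by simp
  qed
  show "\<forall>i\<in>{1..n}. \<forall>j\<in>{1..n}. \<forall>k\<in>{1..n}. a i j - a j i + a j k - a k j = a i k - a k i"
    using final_alg[OF _ H] n3 by simp
next
  have n3: "n \<ge> 3" using assms(1) .
  let ?S = "{1..n}"
  let ?f = "lop_obj n a"
  assume R: "\<forall>i\<in>{1..n}. \<forall>j\<in>{1..n}. \<forall>k\<in>{1..n}. a i j - a j i + a j k - a k j = a i k - a k i"
  show "fourier_coeff_zero n [n - 2, 1, 1] ?f"
    unfolding fourier_coeff_zero_def
  proof (intro allI impI)
    fix t T assume tab: "tableau n [n-2,1,1] t"
    interpret T: tab3 n t using n3 tab by unfold_locales
    show "fourier_on_polytabloid n [n-2,1,1] ?f t T = 0"
    proof (cases "\<exists>u\<in>?S. \<exists>v\<in>?S. T = tabS n u v")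
      case False thus ?thesis using T.fourier_other by blast
    next
      case True
      then obtain u v where u: "u \<in> ?S" and v: "v \<in> ?S" and Tuv: "T = tabS n u v" by blast
      have F: "fourier_on_polytabloid n [n-2,1,1] ?f t T =
          (\<Sum>\<sigma>\<in>{\<sigma>. \<sigma> permutes ?S}. ?f \<sigma> * EE (t (0,0)) (t (1,0)) (t (2,0)) (inv \<sigma> u) (inv \<sigma> v))"
        unfolding Tuv by (rule T.fourier_uv)
      show ?thesis
      proof (cases "u = v")
        case True
        thus ?thesis unfolding F using EE_diag[OF T.xyz_dist(2)] by simp
      next
        case False
        obtain B where B: "(\<Sum>\<sigma>\<in>{\<sigma>. \<sigma> permutes ?S}. ?f \<sigma> * EE (t (0,0)) (t (1,0)) (t (2,0)) (inv \<sigma> u) (inv \<sigma> v))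
          = - B * (\<Sum>l\<in>?S-{u,v}. (a u v - a v u) + (a v l - a l v) + (a l u - a u l))"
          using trip3.main_formula[OF T.trip_ok refl n3 u v False, of a] by blast
        have "(\<Sum>l\<in>?S-{u,v}. (a u v - a v u) + (a v l - a l v) + (a l u - a u l)) = 0"
        proof (rule sum.neutral, rule ballI)
          fix l assume l: "l \<in> ?S - {u,v}"
          hence "a u v - a v u + a v l - a l v = a u l - a l u" using R u v by blast
          thus "(a u v - a v u) + (a v l - a l v) + (a l u - a u l) = 0" by simp
        qed
        thus ?thesis unfolding F B by simp
      qed
    qed
  qed
qed

end
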